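(* Let $\Phi(z,w)=\sum_{n,m=0}^\infty a_{nm}z^nw^m$ be an entire function on $\mathbb{C}^2$ (the series converging on all of $\mathbb{C}^2$), and define $\varphi(\zeta)=\Phi(\zeta,\bar\zeta)=\sum_{n,m\ge0}a_{nm}\zeta^n\bar\zeta^m$ for $\zeta\in\mathbb{C}$. Let $\Delta=\{|\zeta|\le1\}$, $\Gamma=\{|\zeta|=1\}$, $\gamma=\{(\zeta,\varphi(\zeta)):\zeta\in\Gamma\}\subset\mathbb{C}^2$ and $\Sigma=\{(\zeta,\varphi(\zeta)):\zeta\in\Delta\}\subset\mathbb{C}^2$. If $\Sigma\subset\widehat\gamma$, where $\widehat\gamma$ is the projective hull of $\gamma$, then $\varphi$ is a holomorphic function of $\zeta$ on $\operatorname{int}\Delta$ (in particular on $\operatorname{int}\Delta\setminus\{0\}$, with a removable singularity at $\zeta=0$).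
   Context: For a compact set $X\subset\mathbb{C}^n$, let $\mathcal{P}_d$ denote the space of complex polynomials on $\mathbb{C}^n$ of degree at most $d$. The projective hull $\widehat X$ of $X$ is the set of points $x\in\mathbb{C}^n$ for which there exists a constant $C_x$ such that $|P(x)|\le (C_x)^d\sup_X|P|$ for all $P\in\mathcal{P}_d$ and all $d\ge0$. *)

theory Defs
  imports "HOL-Complex_Analysis.Complex_Analysis"
begin

definition poly2 :: "nat \<Rightarrow> (nat \<Rightarrow> nat \<Rightarrow> complex) \<Rightarrow> complex \<times> complex \<Rightarrow> complex" where
  "poly2 d c p = (\<Sum>i\<le>d. \<Sum>j\<le>d - i. c i j * fst p ^ i * snd p ^ j)"

definition proj_hull :: "(complex \<times> complex) set \<Rightarrow> (complex \<times> complex) set" where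
  "proj_hull X = {x. \<exists>C::real. \<forall>d c. cmod (poly2 d c x) \<le> C ^ d * (SUP y\<in>X. cmod (poly2 d c y))}"

end

theory Submission
  imports Defs
begin

definition Sq :: "nat \<Rightarrow> (nat \<times> nat) set" where "Sq N = {..N} \<times> {..N}"

definition Aa :: "(nat \<Rightarrow> nat \<Rightarrow> complex) \<Rightarrow> real \<Rightarrow> real" where
  "Aa a R = infsum (\<lambda>(n,m). cmod (a n m) * R^(n+m)) UNIV"

definition tailS :: "(nat \<Rightarrow> nat \<Rightarrow> complex) \<Rightarrow> nat \<Rightarrow> real \<Rightarrow> real" where
  "tailS a N M = infsum (\<lambda>(n,m). cmod (a n m) * M^(n+m)) (- Sq N)"

lemma finite_Sq[simp]: "finite (Sq N)" by (simp add: Sq_def)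

lemma abs_summ:
  assumes entire: "\<And>z w. (\<lambda>(n, m). a n m * z ^ n * w ^ m) summable_on UNIV"
    and M: "M \<ge> 0"
  shows "(\<lambda>(n,m). cmod (a n m) * M^(n+m)) summable_on A"
proof -
  have "(\<lambda>(n, m). a n m * of_real M ^ n * of_real M ^ m) summable_on UNIV" by (rule entire)
  hence "(\<lambda>x. norm ((\<lambda>(n, m). a n m * of_real M ^ n * of_real M ^ m) x)) summable_on UNIV"
    using summable_on_iff_abs_summable_on_complex by blast
  moreover have "(\<lambda>x. norm ((\<lambda>(n, m). a n m * of_real M ^ n * of_real M ^ m) x)) = (\<lambda>(n,m). cmod (a n m) * M^(n+m))"
    using M by (auto simp: norm_mult norm_power power_add)
  ultimately show ?thesis using summable_on_subset_banach by fastforce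
qed

lemma tail_bound:
  assumes entire: "\<And>z w. (\<lambda>(n, m). a n m * z ^ n * w ^ m) summable_on UNIV"
    and R: "R \<ge> 1" and M: "M \<ge> 0"
  shows "tailS a N M \<le> Aa a (R*M) / R^(N+1)"
proof -
  have RM: "R*M \<ge> 0" using R M by simp
  have "tailS a N M \<le> infsum (\<lambda>(n,m). cmod (a n m) * (R*M)^(n+m) / R^(N+1)) (- Sq N)"
    unfolding tailS_def
  proof (rule infsum_mono)
    show "(\<lambda>(n,m). cmod (a n m) * M^(n+m)) summable_on - Sq N" by (rule abs_summ[OF entire M])
    show "(\<lambda>(n,m). cmod (a n m) * (R*M)^(n+m) / R^(N+1)) summable_on - Sq N"
      using summable_on_cmult_left[OF abs_summ[OF entire RM], where c="1 / R^(N+1)"]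
      by (simp add: case_prod_unfold)
    fix x assume "x \<in> - Sq N"
    then obtain n m where x: "x = (n,m)" and nm: "n + m \<ge> N + 1" by (cases x) (auto simp: Sq_def)
    have "R^(N+1) \<le> R^(n+m)" using R nm by (intro power_increasing) auto
    hence "M^(n+m) * R^(N+1) \<le> M^(n+m) * R^(n+m)" using M by (simp add: mult_left_mono)
    hence "M^(n+m) \<le> (R*M)^(n+m) / R^(N+1)" using R
      by (simp add: pos_le_divide_eq power_mult_distrib mult.commute)
    thus "(case x of (n,m) \<Rightarrow> cmod (a n m) * M^(n+m)) \<le> (case x of (n,m) \<Rightarrow> cmod (a n m) * (R*M)^(n+m) / R^(N+1))"
      using x mult_left_mono[OF _ norm_ge_zero, of "M^(n+m)" "(R*M)^(n+m) / R^(N+1)" "a n m"]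
      by (simp add: times_divide_eq_right)
  qed
  also have "\<dots> = infsum (\<lambda>(n,m). cmod (a n m) * (R*M)^(n+m)) (- Sq N) / R^(N+1)"
    using infsum_cmult_left[of "1 / R^(N+1)" "\<lambda>(n,m). cmod (a n m) * (R*M)^(n+m)" "- Sq N"]
      abs_summ[OF entire RM]
    by (simp add: case_prod_unfold)
  also have "\<dots> \<le> Aa a (R*M) / R^(N+1)"
    unfolding Aa_def using R RM
    by (intro divide_right_mono infsum_mono_neutral abs_summ[OF entire RM]) auto
  finally show ?thesis .
qed

lemma tail_split:
  assumes entire: "\<And>z w. (\<lambda>(n, m). a n m * z ^ n * w ^ m) summable_on UNIV"
    and z: "norm z \<le> M" and w: "norm w \<le> M"
  shows "infsum (\<lambda>(n, m). a n m * z ^ n * w ^ m) UNIV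
          = sum (\<lambda>(n, m). a n m * z ^ n * w ^ m) (Sq N) + infsum (\<lambda>(n, m). a n m * z ^ n * w ^ m) (- Sq N)"
    and "norm (infsum (\<lambda>(n, m). a n m * z ^ n * w ^ m) (- Sq N)) \<le> tailS a N M"
proof -
  let ?f = "\<lambda>(n, m). a n m * z ^ n * w ^ m"
  have M: "M \<ge> 0" using z norm_ge_zero order_trans by blast
  have s: "?f summable_on A" for A using summable_on_subset_banach[OF entire] by blast
  have "infsum ?f (Sq N \<union> - Sq N) = infsum ?f (Sq N) + infsum ?f (- Sq N)"
    by (rule infsum_Un_disjoint[OF s s]) auto
  thus "infsum ?f UNIV = sum ?f (Sq N) + infsum ?f (- Sq N)" by simp
  have ns: "(\<lambda>x. norm (?f x)) summable_on - Sq N" using s summable_on_iff_abs_summable_on_complex by blast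
  have "norm (infsum ?f (- Sq N)) \<le> infsum (\<lambda>x. norm (?f x)) (- Sq N)"
    by (rule norm_infsum_le[OF has_sum_infsum[OF s] has_sum_infsum[OF ns]]) simp
  also have "\<dots> \<le> tailS a N M" unfolding tailS_def
  proof (rule infsum_mono)
    show "(\<lambda>x. norm (?f x)) summable_on - Sq N" using s summable_on_iff_abs_summable_on_complex by blast
    show "(\<lambda>(n,m). cmod (a n m) * M^(n+m)) summable_on - Sq N" by (rule abs_summ[OF entire M])
    fix x :: "nat \<times> nat"
    obtain n m where x: "x = (n,m)" by (cases x)
    have "norm z ^ n * norm w ^ m \<le> M^n * M^m" using z w M by (intro mult_mono power_mono) auto
    thus "norm (?f x) \<le> (case x of (n,m) \<Rightarrow> cmod (a n m) * M^(n+m))"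
      using x by (simp add: norm_mult norm_power power_add mult.assoc mult_left_mono)
  qed
  finally show "norm (infsum ?f (- Sq N)) \<le> tailS a N M" .
qed


lemma poly2_diff: "poly2 d (\<lambda>i j. c1 i j - c2 i j) p = poly2 d c1 p - poly2 d c2 p"
  unfolding poly2_def by (simp add: algebra_simps sum_subtractf)

lemma poly2_add: "poly2 d (\<lambda>i j. c1 i j + c2 i j) p = poly2 d c1 p + poly2 d c2 p"
  unfolding poly2_def by (simp add: algebra_simps sum.distrib)

lemma sum_delta_mult: "finite S \<Longrightarrow> (\<Sum>j\<in>S. (if j = j0 then b else 0) * (X j::complex)) = (if j0 \<in> S then b * X j0 else 0)"
  by (induction S rule: finite_induct) auto

lemma poly2_monom:
  assumes "i0 + j0 \<le> d"
  shows "poly2 d (\<lambda>i j. if i = i0 \<and> j = j0 then b else 0) p = b * fst p ^ i0 * snd p ^ j0"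
proof -
  have inner: "(\<Sum>j\<le>d-i. (if i=i0 \<and> j=j0 then b else 0) * fst p^i * snd p^j) = (if i = i0 then b * fst p^i0 * snd p^j0 else 0)" for i
  proof (cases "i = i0")
    case True
    have "(\<Sum>j\<le>d-i. (if i=i0 \<and> j=j0 then b else 0) * fst p^i * snd p^j)
        = (\<Sum>j\<le>d-i0. (if j=j0 then b else 0) * (fst p^i0 * snd p^j))"
      using True by (simp add: mult.assoc)
    also have "\<dots> = b * fst p^i0 * snd p^j0" using assms by (subst sum_delta_mult) (auto simp: mult.assoc)
    finally show ?thesis using True by simp
  qed simp
  show ?thesis unfolding poly2_def inner using assms by simp
qed

lemma poly2_exists:
  assumes "finite F" "\<forall>k\<in>F. i k + j k \<le> d"
  shows "\<exists>c. \<forall>p. poly2 d c p = (\<Sum>k\<in>F. b k * fst p ^ i k * snd p ^ j k)"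
  using assms
proof (induction F rule: finite_induct)
  case empty
  show ?case by (rule exI[of _ "\<lambda>_ _. 0"]) (simp add: poly2_def)
next
  case (insert k F)
  then obtain c where c: "\<forall>p. poly2 d c p = (\<Sum>k\<in>F. b k * fst p ^ i k * snd p ^ j k)" by auto
  show ?case
    apply (rule exI[of _ "\<lambda>i' j'. c i' j' + (if i' = i k \<and> j' = j k then b k else 0)"])
    using insert c by (simp add: poly2_add poly2_monom add.commute)
qed


lemma ident:
  fixes u w t :: complex
  assumes "w = (\<Sum>k\<in>Sq N. a (fst k) (snd k) * u^fst k * cnj u^snd k) + t"
  shows "u^N * w - (\<Sum>k\<in>Sq N. a (fst k) (snd k) * u^(fst k + N - snd k))
       = (\<Sum>k\<in>Sq N. a (fst k) (snd k) * (u^(fst k + N) * cnj u^snd k - u^(fst k + N - snd k))) + u^N * t"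
  by (simp add: assms algebra_simps sum_distrib_left sum_subtractf power_add)

lemma term_sphere:
  assumes "cmod u = 1" "m \<le> N"
  shows "u^(n+N) * cnj u^m = u^(n+N-m)"
proof -
  have "u^(n+N) = u^(n+N-m) * u^m" using assms(2) by (simp add: power_add[symmetric])
  hence "u^(n+N) * cnj u^m = u^(n+N-m) * (u * cnj u)^m" by (simp add: power_mult_distrib)
  also have "u * cnj u = 1" using complex_norm_square[of u] assms(1) by simp
  finally show ?thesis by simp
qed

lemma term_inside:
  assumes "u \<noteq> 0" "m \<le> N"
  shows "u^(n+N) * cnj u^m - u^(n+N-m) = u^N * (u^n * cnj u^m - u^n * (1/u)^m)"
proof -
  have "u^(n+N-m) = u^(n+N-m) * (u * (1/u))^m" using assms by simp
  also have "\<dots> = u^(n+N-m) * u^m * (1/u)^m" by (simp only: power_mult_distrib mult.assoc)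
  also have "u^(n+N-m) * u^m = u^(n+N)" using assms(2) by (simp add: power_add[symmetric])
  finally have "u^(n+N-m) = u^(n+N) * (1/u)^m" .
  thus ?thesis by (simp add: algebra_simps power_add)
qed


lemma split_fs:
  fixes z w :: complex
  assumes entire: "\<And>z w. (\<lambda>(n, m). a n m * z ^ n * w ^ m) summable_on UNIV"
    and z: "norm z \<le> M" and w: "norm w \<le> M"
  shows "infsum (\<lambda>(n, m). a n m * z ^ n * w ^ m) UNIV
          = (\<Sum>k\<in>Sq N. a (fst k) (snd k) * z ^ fst k * w ^ snd k) + infsum (\<lambda>(n, m). a n m * z ^ n * w ^ m) (- Sq N)"
  using tail_split(1)[OF entire z w, of N] by (simp add: case_prod_unfold)

lemma phi_eq_g:
  fixes a :: "nat \<Rightarrow> nat \<Rightarrow> complex" and \<phi> :: "complex \<Rightarrow> complex"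
  assumes entire: "\<And>z w. (\<lambda>(n, m). a n m * z ^ n * w ^ m) summable_on UNIV"
    and phi_def: "\<And>\<zeta>. \<phi> \<zeta> = (\<Sum>\<^sub>\<infinity>(n, m). a n m * \<zeta> ^ n * cnj \<zeta> ^ m)"
    and x: "(\<zeta>, \<phi> \<zeta>) \<in> proj_hull ((\<lambda>\<zeta>. (\<zeta>, \<phi> \<zeta>)) ` sphere 0 1)"
    and z0: "0 < cmod \<zeta>" and z1: "cmod \<zeta> < 1"
  shows "\<phi> \<zeta> = infsum (\<lambda>(n,m). a n m * \<zeta>^n * (1/\<zeta>)^m) UNIV"
proof -
  define X where "X = (\<lambda>\<zeta>. (\<zeta>, \<phi> \<zeta>)) ` sphere (0::complex) 1"
  from x obtain C :: real where C: "\<And>d c. cmod (poly2 d c (\<zeta>, \<phi> \<zeta>)) \<le> C^d * (SUP y\<in>X. cmod (poly2 d c y))"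
    unfolding proj_hull_def X_def by blast
  define B where "B = C^2 + 1"
  have B1: "B \<ge> 1" unfolding B_def by simp
  have CB: "\<bar>C\<bar> \<le> B"
  proof -
    have "0 \<le> (\<bar>C\<bar> - 1)^2" by simp
    hence "2 * \<bar>C\<bar> \<le> C^2 + 1" by (simp add: power2_eq_square algebra_simps)
    thus ?thesis unfolding B_def by simp
  qed
  define r where "r = cmod \<zeta>"
  have r0: "0 < r" and r1: "r < 1" using z0 z1 by (auto simp: r_def)
  define R where "R = 2 * B^2 / r"
  have "B^2 \<ge> 1" using B1 by simp
  hence "2 * B^2 \<ge> 2 * r" using r1 by simp
  hence R2: "R \<ge> 2" unfolding R_def using r0 by (simp add: le_divide_eq)
  define K where "K = Aa a R"
  define M2 where "M2 = 1 / r"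
  have M21: "M2 \<ge> 1" unfolding M2_def using r0 r1 by simp
  define S1 where "S1 N = (\<Sum>k\<in>Sq N. a (fst k) (snd k) * \<zeta> ^ fst k * cnj \<zeta> ^ snd k)" for N
  define S2 where "S2 N = (\<Sum>k\<in>Sq N. a (fst k) (snd k) * \<zeta> ^ fst k * (1/\<zeta>) ^ snd k)" for N
  define g where "g = infsum (\<lambda>(n,m). a n m * \<zeta>^n * (1/\<zeta>)^m) UNIV"
  have tlK: "tailS a N 1 \<le> K / 2^(N+1)" for N
  proof -
    have "tailS a N 1 \<le> K / R^(N+1)" using tail_bound[OF entire, of R 1 N] R2 by (simp add: K_def)
    also have "\<dots> \<le> K / 2^(N+1)"
    proof (rule divide_left_mono)
      show "0 \<le> K" unfolding K_def Aa_def using R2 by (intro infsum_nonneg) auto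
      show "(2::real)^(N+1) \<le> R^(N+1)" using R2 by (intro power_mono) auto
      show "0 < R^(N+1) * 2^(N+1)" using R2 by simp
    qed
    finally show ?thesis .
  qed
  have main: "cmod (\<phi> \<zeta> - g) \<le> (3*K + Aa a (2*M2)) * (1/2)^(N+1)" for N
  proof -
    obtain c1 where c1: "\<forall>p. poly2 (2*N+1) c1 p = (\<Sum>k\<in>{()}. 1 * fst p ^ N * snd p ^ 1)"
      using poly2_exists[of "{()}" "\<lambda>_. N" "\<lambda>_. 1" "2*N+1" "\<lambda>_. 1"] by auto
    obtain c2 where c2: "\<forall>p. poly2 (2*N+1) c2 p = (\<Sum>k\<in>Sq N. a (fst k) (snd k) * fst p ^ (fst k + N - snd k) * snd p ^ 0)"
    proof -
      have "\<forall>k\<in>Sq N. fst k + N - snd k + 0 \<le> 2*N+1" by (auto simp: Sq_def)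
      from poly2_exists[OF finite_Sq this, of "\<lambda>k. a (fst k) (snd k)"] that show ?thesis by blast
    qed
    define c where "c = (\<lambda>i j. c1 i j - c2 i j)"
    have pc: "poly2 (2*N+1) c p = fst p ^ N * snd p - (\<Sum>k\<in>Sq N. a (fst k) (snd k) * fst p ^ (fst k + N - snd k))" for p
      unfolding c_def poly2_diff using c1[rule_format, of p] c2[rule_format, of p] by simp
    have onX: "cmod (poly2 (2*N+1) c y) \<le> tailS a N 1" if "y \<in> X" for y
    proof -
      obtain u where u: "cmod u = 1" and y: "y = (u, \<phi> u)" using \<open>y \<in> X\<close> unfolding X_def by auto
      have nu: "norm (cnj u) \<le> 1" "norm u \<le> 1" using u by auto
      define t where "t = infsum (\<lambda>(n, m). a n m * u ^ n * cnj u ^ m) (- Sq N)"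
      have "\<phi> u = (\<Sum>k\<in>Sq N. a (fst k) (snd k) * u ^ fst k * cnj u ^ snd k) + t"
        unfolding phi_def t_def by (rule split_fs[OF entire nu(2) nu(1)])
      from ident[OF this]
      have "poly2 (2*N+1) c y = (\<Sum>k\<in>Sq N. a (fst k) (snd k) * (u^(fst k + N) * cnj u^snd k - u^(fst k + N - snd k))) + u^N * t"
        using pc y by simp
      also have "(\<Sum>k\<in>Sq N. a (fst k) (snd k) * (u^(fst k + N) * cnj u^snd k - u^(fst k + N - snd k))) = 0"
        by (intro sum.neutral) (auto simp: Sq_def term_sphere[OF u])
      finally have "poly2 (2*N+1) c y = u^N * t" by simp
      hence "cmod (poly2 (2*N+1) c y) = cmod t" using u by (simp add: norm_mult norm_power)
      also have "\<dots> \<le> tailS a N 1" unfolding t_def by (rule tail_split(2)[OF entire nu(2) nu(1)])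
      finally show ?thesis .
    qed
    have Xne: "X \<noteq> {}" unfolding X_def by (auto intro: exI[of _ 1])
    have bdd: "bdd_above ((\<lambda>y. cmod (poly2 (2*N+1) c y)) ` X)" by (rule bdd_aboveI2, rule onX)
    have Sup_le: "(SUP y\<in>X. cmod (poly2 (2*N+1) c y)) \<le> tailS a N 1"
      using onX Xne by (intro cSUP_least) auto
    have Sup_ge: "(SUP y\<in>X. cmod (poly2 (2*N+1) c y)) \<ge> 0"
    proof -
      obtain y where "y \<in> X" using Xne by auto
      thus ?thesis using bdd by (intro cSUP_upper2) auto
    qed
    have "cmod (poly2 (2*N+1) c (\<zeta>, \<phi> \<zeta>)) \<le> C^(2*N+1) * (SUP y\<in>X. cmod (poly2 (2*N+1) c y))" by (rule C)
    also have "\<dots> \<le> \<bar>C\<bar>^(2*N+1) * (SUP y\<in>X. cmod (poly2 (2*N+1) c y))"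
      using Sup_ge by (intro mult_right_mono) (metis abs_ge_self power_abs)+
    also have "\<dots> \<le> B^(2*N+1) * tailS a N 1"
      using Sup_le Sup_ge CB by (intro mult_mono power_mono) auto
    finally have Pz: "cmod (poly2 (2*N+1) c (\<zeta>, \<phi> \<zeta>)) \<le> B^(2*N+1) * tailS a N 1" .
    have nz: "norm \<zeta> \<le> 1" "norm (cnj \<zeta>) \<le> 1" using z1 by auto
    define t where "t = infsum (\<lambda>(n, m). a n m * \<zeta> ^ n * cnj \<zeta> ^ m) (- Sq N)"
    have phis: "\<phi> \<zeta> = S1 N + t"
      unfolding phi_def t_def S1_def by (rule split_fs[OF entire nz(1) nz(2)])
    have tb: "cmod t \<le> tailS a N 1" unfolding t_def by (rule tail_split(2)[OF entire nz(1) nz(2)])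
    from ident[OF phis[unfolded S1_def]]
    have "poly2 (2*N+1) c (\<zeta>, \<phi> \<zeta>) = (\<Sum>k\<in>Sq N. a (fst k) (snd k) * (\<zeta>^(fst k + N) * cnj \<zeta>^snd k - \<zeta>^(fst k + N - snd k))) + \<zeta>^N * t"
      using pc by simp
    also have "(\<Sum>k\<in>Sq N. a (fst k) (snd k) * (\<zeta>^(fst k + N) * cnj \<zeta>^snd k - \<zeta>^(fst k + N - snd k)))
       = (\<Sum>k\<in>Sq N. \<zeta>^N * (a (fst k) (snd k) * \<zeta> ^ fst k * cnj \<zeta> ^ snd k - a (fst k) (snd k) * \<zeta> ^ fst k * (1/\<zeta>) ^ snd k))"
    proof (intro sum.cong refl)
      fix k assume "k \<in> Sq N"
      hence kN: "snd k \<le> N" by (auto simp: Sq_def)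
      have e: "\<zeta>^(fst k + N) * cnj \<zeta>^snd k - \<zeta>^(fst k+N-snd k) = \<zeta>^N * (\<zeta>^fst k * cnj \<zeta>^snd k - \<zeta>^fst k * (1/\<zeta>)^snd k)"
        using term_inside[OF _ kN, of \<zeta> "fst k"] z0 by auto
      show "a (fst k) (snd k) * (\<zeta>^(fst k + N) * cnj \<zeta>^snd k - \<zeta>^(fst k + N - snd k))
         = \<zeta>^N * (a (fst k) (snd k) * \<zeta> ^ fst k * cnj \<zeta> ^ snd k - a (fst k) (snd k) * \<zeta> ^ fst k * (1/\<zeta>) ^ snd k)"
        unfolding e by (simp add: algebra_simps)
    qed
    also have "\<dots> = \<zeta>^N * (S1 N - S2 N)"
      unfolding S1_def S2_def sum_distrib_left[symmetric] sum_subtractf[symmetric] by (rule refl)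
    finally have "\<zeta>^N * (S1 N - S2 N) = poly2 (2*N+1) c (\<zeta>, \<phi> \<zeta>) - \<zeta>^N * t" by simp
    note eqD = this
    have "r^N * cmod (S1 N - S2 N) = cmod (\<zeta>^N * (S1 N - S2 N))" by (simp add: norm_mult norm_power r_def)
    also have "\<dots> \<le> cmod (poly2 (2*N+1) c (\<zeta>, \<phi> \<zeta>)) + cmod (\<zeta>^N * t)"
      unfolding eqD by (rule norm_triangle_ineq4)
    also have "cmod (\<zeta>^N * t) = r^N * cmod t" by (simp add: norm_mult norm_power r_def)
    also have "r^N * cmod t \<le> r^N * tailS a N 1" using tb r0 by (intro mult_left_mono) auto
    finally have "r^N * cmod (S1 N - S2 N) \<le> B^(2*N+1) * tailS a N 1 + r^N * tailS a N 1" using Pz by linarith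
    note rN = this
    define h where "h = (1/2::real)^(N+1)"
    have h0: "h \<ge> 0" unfolding h_def by simp
    have tlh: "tailS a N 1 \<le> K * h" using tlK[of N] unfolding h_def by (simp add: power_divide)
    have K0: "0 \<le> K" unfolding K_def Aa_def using R2 by (intro infsum_nonneg) auto
    have rR: "r * R = 2 * B^2" unfolding R_def using r0 by simp
    have "2^(N+1) * B^(2*N+1) \<le> (2::real)^(N+1) * B^(2*N+2)"
      using B1 by (intro mult_left_mono power_increasing) auto
    also have "\<dots> = (r*R)^(N+1)" proof -
      have "(2::nat)*N+2 = 2*(N+1)" by simp
      hence e: "B^(2*N+2) = (B^2)^(N+1)" unfolding power_mult[symmetric] by (simp only:)
      show ?thesis unfolding rR power_mult_distrib e by (rule refl)
    qed
    also have "\<dots> = r^(N+1) * R^(N+1)" by (simp add: power_mult_distrib)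
    also have "\<dots> \<le> r^N * R^(N+1)" using r0 r1 R2
      by (intro mult_right_mono) (auto simp: power_le_one mult_left_le_one_le)
    finally have keyineq: "2^(N+1) * B^(2*N+1) \<le> r^N * R^(N+1)" .
    have "B^(2*N+1) * tailS a N 1 \<le> B^(2*N+1) * (K / R^(N+1))"
      using tail_bound[OF entire, of R 1 N] R2 B1 by (intro mult_left_mono) (auto simp: K_def)
    also have "\<dots> \<le> r^N * (K * h)"
    proof -
      have "B^(2*N+1) * (K / R^(N+1)) = K * (B^(2*N+1) / R^(N+1))" by simp
      also have "B^(2*N+1) / R^(N+1) \<le> r^N * h"
        using keyineq R2 unfolding h_def by (simp add: divide_le_eq power_divide field_simps)
      have "K * (B^(2*N+1) / R^(N+1)) \<le> K * (r^N * h)" using K0 \<open>B^(2*N+1) / R^(N+1) \<le> r^N * h\<close>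
        by (rule mult_left_mono[rotated])
      also have "\<dots> = r^N * (K * h)" by simp
      finally show ?thesis by simp
    qed
    finally have "B^(2*N+1) * tailS a N 1 \<le> r^N * (K * h)" .
    moreover have "r^N * tailS a N 1 \<le> r^N * (K * h)" using tlh r0 by (intro mult_left_mono) auto
    moreover have "r^N * (2 * K * h) = r^N * (K * h) + r^N * (K * h)" by (simp add: algebra_simps)
    ultimately have "r^N * cmod (S1 N - S2 N) \<le> r^N * (2 * K * h)" using rN by linarith
    hence D: "cmod (S1 N - S2 N) \<le> 2 * K * h" using r0 by simp
    have nz2a: "norm \<zeta> \<le> M2" using r1 M21 unfolding r_def by linarith
    have nz2: "norm \<zeta> \<le> M2" "norm (1/\<zeta>) \<le> M2" using nz2a by (auto simp: M2_def r_def norm_divide)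
    define t2 where "t2 = infsum (\<lambda>(n, m). a n m * \<zeta> ^ n * (1/\<zeta>) ^ m) (- Sq N)"
    have gs: "g = S2 N + t2"
      unfolding g_def t2_def S2_def by (rule split_fs[OF entire nz2])
    have "cmod t2 \<le> tailS a N M2" unfolding t2_def by (rule tail_split(2)[OF entire nz2])
    also have "\<dots> \<le> Aa a (2*M2) / 2^(N+1)" using tail_bound[OF entire, of 2 M2 N] M21 by simp
    finally have t2b: "cmod t2 \<le> Aa a (2*M2) * h" unfolding h_def by (simp add: power_divide)
    have "\<phi> \<zeta> - g = (S1 N - S2 N) + t - t2" using phis gs by simp
    moreover have "cmod ((S1 N - S2 N) + t - t2) \<le> cmod ((S1 N - S2 N) + t) + cmod t2" by (rule norm_triangle_ineq4)
    moreover have "cmod ((S1 N - S2 N) + t) \<le> cmod (S1 N - S2 N) + cmod t" by (rule norm_triangle_ineq)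
    ultimately have "cmod (\<phi> \<zeta> - g) \<le> cmod (S1 N - S2 N) + cmod t + cmod t2" by simp
    also have "\<dots> \<le> 2*K*h + K*h + Aa a (2*M2) * h" using D tb tlh t2b by linarith
    finally show ?thesis unfolding h_def by (simp add: algebra_simps)
  qed
  define Q where "Q = 3*K + Aa a (2*M2)"
  have lim: "(\<lambda>N. Q * (1/2::real)^(N+1)) \<longlonglongrightarrow> 0"
  proof -
    have "(\<lambda>N. (1/2::real)^N) \<longlonglongrightarrow> 0" by (rule LIMSEQ_realpow_zero) auto
    hence "(\<lambda>N. (1/2::real)^(Suc N)) \<longlonglongrightarrow> 0" by (rule LIMSEQ_Suc)
    thus ?thesis by (intro tendsto_mult_right_zero) simp
  qed
  have "cmod (\<phi> \<zeta> - g) \<le> 0"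
    by (rule LIMSEQ_le_const[OF lim]) (use main in \<open>auto simp: Q_def\<close>)
  thus ?thesis unfolding g_def by simp
qed


lemma ulim:
  fixes w :: "complex \<Rightarrow> complex"
  assumes entire: "\<And>z w. (\<lambda>(n, m). a n m * z ^ n * w ^ m) summable_on UNIV"
    and M: "M \<ge> 0"
    and bd: "\<And>\<zeta>. \<zeta> \<in> S \<Longrightarrow> norm \<zeta> \<le> M \<and> norm (w \<zeta>) \<le> M"
    and fe: "\<And>\<zeta>. \<zeta> \<in> S \<Longrightarrow> f \<zeta> = infsum (\<lambda>(n,m). a n m * \<zeta>^n * w \<zeta>^m) UNIV"
  shows "uniform_limit S (\<lambda>N \<zeta>. \<Sum>k\<in>Sq N. a (fst k) (snd k) * \<zeta>^fst k * w \<zeta>^snd k) f sequentially"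
  unfolding uniform_limit_iff
proof (intro allI impI)
  fix e :: real assume e: "e > 0"
  have "(\<lambda>N. (1/2::real)^N) \<longlonglongrightarrow> 0" by (rule LIMSEQ_realpow_zero) auto
  hence "(\<lambda>N. (1/2::real)^(Suc N)) \<longlonglongrightarrow> 0" by (rule LIMSEQ_Suc)
  hence "(\<lambda>N. Aa a (2*M) * (1/2::real)^(Suc N)) \<longlonglongrightarrow> 0" by (intro tendsto_mult_right_zero) 
  hence ev: "\<forall>\<^sub>F N in sequentially. Aa a (2*M) * (1/2::real)^(Suc N) < e" using e by (rule order_tendstoD(2))
  show "\<forall>\<^sub>F N in sequentially. \<forall>\<zeta>\<in>S. dist (\<Sum>k\<in>Sq N. a (fst k) (snd k) * \<zeta>^fst k * w \<zeta>^snd k) (f \<zeta>) < e"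
    using ev
  proof eventually_elim
    case (elim N)
    show ?case
    proof
      fix \<zeta> assume z: "\<zeta> \<in> S"
      have b1: "norm \<zeta> \<le> M" and b2: "norm (w \<zeta>) \<le> M" using bd[OF z] by auto
      have "f \<zeta> = (\<Sum>k\<in>Sq N. a (fst k) (snd k) * \<zeta>^fst k * w \<zeta>^snd k) + infsum (\<lambda>(n, m). a n m * \<zeta> ^ n * w \<zeta> ^ m) (- Sq N)"
        unfolding fe[OF z] by (rule split_fs[OF entire b1 b2])
      hence "dist (\<Sum>k\<in>Sq N. a (fst k) (snd k) * \<zeta>^fst k * w \<zeta>^snd k) (f \<zeta>) = norm (infsum (\<lambda>(n, m). a n m * \<zeta> ^ n * w \<zeta> ^ m) (- Sq N))"
        by (simp add: dist_norm norm_minus_commute)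
      also have "\<dots> \<le> tailS a N M" by (rule tail_split(2)[OF entire b1 b2])
      also have "\<dots> \<le> Aa a (2*M) / 2^(N+1)" using tail_bound[OF entire, of 2 M N] M by simp
      also have "\<dots> = Aa a (2*M) * (1/2::real)^(Suc N)" by (simp add: power_divide)
      also have "\<dots> < e" by (rule elim)
      finally show "dist (\<Sum>k\<in>Sq N. a (fst k) (snd k) * \<zeta>^fst k * w \<zeta>^snd k) (f \<zeta>) < e" .
    qed
  qed
qed

theorem theorem5:
  fixes a :: "nat \<Rightarrow> nat \<Rightarrow> complex" and \<phi> :: "complex \<Rightarrow> complex"
  assumes entire: "\<And>z w. (\<lambda>(n, m). a n m * z ^ n * w ^ m) summable_on UNIV"
    and phi_def: "\<And>\<zeta>. \<phi> \<zeta> = (\<Sum>\<^sub>\<infinity>(n, m). a n m * \<zeta> ^ n * cnj \<zeta> ^ m)"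
    and hull: "(\<lambda>\<zeta>. (\<zeta>, \<phi> \<zeta>)) ` cball 0 1 \<subseteq> proj_hull ((\<lambda>\<zeta>. (\<zeta>, \<phi> \<zeta>)) ` sphere 0 1)"
  shows "\<phi> holomorphic_on ball 0 1"
proof -
  have peq: "\<phi> \<zeta> = infsum (\<lambda>(n,m). a n m * \<zeta>^n * (1/\<zeta>)^m) UNIV" if "0 < cmod \<zeta>" "cmod \<zeta> < 1" for \<zeta>
  proof (rule phi_eq_g[OF entire phi_def _ that])
    have "\<zeta> \<in> cball 0 1" using that by simp
    hence "(\<zeta>, \<phi> \<zeta>) \<in> (\<lambda>\<zeta>. (\<zeta>, \<phi> \<zeta>)) ` cball 0 1" by (rule imageI)
    with hull show "(\<zeta>, \<phi> \<zeta>) \<in> proj_hull ((\<lambda>\<zeta>. (\<zeta>, \<phi> \<zeta>)) ` sphere 0 1)" by (rule subsetD)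
  qed
  have cont: "continuous_on (cball 0 1) \<phi>"
  proof (rule uniform_limit_theorem)
    show "uniform_limit (cball 0 1) (\<lambda>N \<zeta>. \<Sum>k\<in>Sq N. a (fst k) (snd k) * \<zeta>^fst k * cnj \<zeta>^snd k) \<phi> sequentially"
      by (rule ulim[OF entire, of 1]) (auto simp: phi_def)
    show "\<forall>\<^sub>F N in sequentially. continuous_on (cball 0 1) (\<lambda>\<zeta>. \<Sum>k\<in>Sq N. a (fst k) (snd k) * \<zeta>^fst k * cnj \<zeta>^snd k)"
      by (intro always_eventually allI continuous_intros)
  qed simp
  have diff: "\<phi> field_differentiable (at z0)" if z0: "0 < cmod z0" "cmod z0 < 1" for z0
  proof -
    define \<rho> where "\<rho> = min (cmod z0) (1 - cmod z0) / 2"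
    have \<rho>0: "\<rho> > 0" using z0 by (simp add: \<rho>_def)
    have inb: "cmod z0 / 2 \<le> cmod \<zeta> \<and> cmod \<zeta> < 1" if "\<zeta> \<in> cball z0 \<rho>" for \<zeta>
    proof -
      have "cmod (\<zeta> - z0) \<le> \<rho>" using that by (simp add: dist_norm norm_minus_commute)
      moreover have "cmod z0 - cmod (\<zeta> - z0) \<le> cmod \<zeta>" "cmod \<zeta> \<le> cmod z0 + cmod (\<zeta> - z0)"
        using norm_triangle_ineq2[of z0 "z0 - \<zeta>"] norm_triangle_ineq[of z0 "\<zeta> - z0"]
        by (auto simp: norm_minus_commute)
      ultimately show ?thesis using z0 \<rho>_def by (auto simp: min_def split: if_splits)
    qed
    define M where "M = 1 + 2 / cmod z0"
    have M1: "M \<ge> 1" using z0 by (simp add: M_def)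
    have ul: "uniform_limit (cball z0 \<rho>) (\<lambda>N \<zeta>. \<Sum>k\<in>Sq N. a (fst k) (snd k) * \<zeta>^fst k * (1/\<zeta>)^snd k) \<phi> sequentially"
    proof (rule ulim[OF entire])
      show "0 \<le> M" using M1 by simp
      fix \<zeta> assume z: "\<zeta> \<in> cball z0 \<rho>"
      note i = inb[OF z]
      have p: "0 < cmod \<zeta>" using i z0 by linarith
      show "\<phi> \<zeta> = infsum (\<lambda>(n,m). a n m * \<zeta>^n * (1/\<zeta>)^m) UNIV" using peq p i by auto
      have "norm (1/\<zeta>) = 1 / cmod \<zeta>" by (simp add: norm_divide)
      also have "\<dots> \<le> 1 / (cmod z0 / 2)" using i z0 p by (intro divide_left_mono) auto
      also have "\<dots> \<le> M" unfolding M_def by simp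
      finally show "norm \<zeta> \<le> M \<and> norm (1/\<zeta>) \<le> M" using i M1 by auto
    qed
    have "continuous_on (cball z0 \<rho>) \<phi> \<and> \<phi> holomorphic_on ball z0 \<rho>"
    proof (rule holomorphic_uniform_limit[OF _ ul])
      have nz: "\<zeta> \<noteq> 0" if "\<zeta> \<in> cball z0 \<rho>" for \<zeta> using inb[OF that] z0 by auto
      show "\<forall>\<^sub>F N in sequentially. continuous_on (cball z0 \<rho>) (\<lambda>\<zeta>. \<Sum>k\<in>Sq N. a (fst k) (snd k) * \<zeta>^fst k * (1/\<zeta>)^snd k)
           \<and> (\<lambda>\<zeta>. \<Sum>k\<in>Sq N. a (fst k) (snd k) * \<zeta>^fst k * (1/\<zeta>)^snd k) holomorphic_on ball z0 \<rho>"
        using nz by (intro always_eventually allI conjI continuous_intros holomorphic_intros) auto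
    qed auto
    hence "\<phi> holomorphic_on ball z0 \<rho>" by blast
    thus ?thesis using \<rho>0 by (intro holomorphic_on_imp_differentiable_at[of _ "ball z0 \<rho>"]) auto
  qed
  show ?thesis
  proof (rule no_isolated_singularity'[where K="{0}"])
    fix z assume "z \<in> {0::complex}"
    hence z: "z = 0" by simp
    have "0 \<in> cball (0::complex) 1" by simp
    with cont[unfolded continuous_on_def] have "(\<phi> \<longlongrightarrow> \<phi> 0) (at 0 within cball 0 1)" by blast
    thus "(\<phi> \<longlongrightarrow> \<phi> z) (at z within ball 0 1)"
      unfolding z by (rule tendsto_within_subset[OF _ ball_subset_cball])
  next
    show "\<phi> holomorphic_on ball 0 1 - {0}" unfolding holomorphic_on_def
    proof
      fix z assume "z \<in> ball 0 1 - {0::complex}"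
      hence "0 < cmod z" "cmod z < 1" by auto
      hence "\<phi> field_differentiable at z" by (rule diff)
      thus "\<phi> field_differentiable at z within (ball 0 1 - {0})" by (rule field_differentiable_at_within)
    qed
  qed simp_all
qed

end
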